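(* Let $G$ be a finite group, let $x \in G$ have prime order $p$, and let $N$ be a normal subgroup of $N_G(\langle x\rangle)$ with $|N| = p^{2k+3}$ for some integer $k \ge 0$. Suppose $x \in N$ and that there exist elements $y, \ell, g_1, \ldots, g_k, h_1, \ldots, h_k \in N \cap C_G(x)$, each of order $p$, and an element $\sigma \in N_G(\langle x, y\rangle)$ such that: (i) $y \notin \langle x\rangle$; (ii) every $g_i$ and every $h_i$ commutes with $y$, whereas $\ell$ does not commute with $y$; (iii) for all $i, j \in \{1,\ldots,k\}$, $g_j$ commutes modulo $\langle x\rangle$ with each of $g_i$, $g_i^{\sigma}$ and $h_i$; (iv) for all $i, j \in \{1,\ldots,k\}$ with $i < j$, $g_j$ commutes modulo $\langle x\rangle$ with $h_i^{\sigma}$, but for each $i$, $g_i$ does not commute modulo $\langle x\rangle$ with $h_i^{\sigma}$. Then: (a) every subset $S \subseteq \{x, y, g_1, \ldots, g_k, h_1, \ldots, h_k, h_1^{\sigma}, \ldots, h_k^{\sigma}\}$ generates a $p$-group of order at least $p^{|S|}$; (b) $N = \langle x, y, g_1, \ldots, g_k, h_1, \ldots, h_k, \ell\rangle$; (c) the group $\langle x, y, g_1, \ldots, g_k, h_1, \ldots, h_k, g_1^{\sigma}, \ldots, g_k^{\sigma}, h_1^{\sigma}, \ldots, h_k^{\sigma}\rangle$ is a normal $p$-subgroup of $C_G(\langle x, y\rangle)$.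
   Context: For $a \in G$, $a^{\sigma} = \sigma^{-1} a \sigma$. Two elements $a, b$ "commute modulo $\langle x\rangle$" means that their commutator $a^{-1}b^{-1}ab$ lies in $\langle x\rangle$. $C_G(\cdot)$ and $N_G(\cdot)$ denote centraliser and normaliser in $G$. *)

theory Defs
  imports "HOL-Algebra.Algebra"
begin

definition conjg :: "('a, 'b) monoid_scheme \<Rightarrow> 'a \<Rightarrow> 'a \<Rightarrow> 'a" where
  "conjg G a s = inv\<^bsub>G\<^esub> s \<otimes>\<^bsub>G\<^esub> a \<otimes>\<^bsub>G\<^esub> s"

definition commr :: "('a, 'b) monoid_scheme \<Rightarrow> 'a \<Rightarrow> 'a \<Rightarrow> 'a" where
  "commr G a b = inv\<^bsub>G\<^esub> a \<otimes>\<^bsub>G\<^esub> inv\<^bsub>G\<^esub> b \<otimes>\<^bsub>G\<^esub> a \<otimes>\<^bsub>G\<^esub> b"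

definition comm_mod :: "('a, 'b) monoid_scheme \<Rightarrow> 'a \<Rightarrow> 'a \<Rightarrow> 'a \<Rightarrow> bool" where
  "comm_mod G x a b \<longleftrightarrow> commr G a b \<in> generate G {x}"

definition centraliser :: "('a, 'b) monoid_scheme \<Rightarrow> 'a set \<Rightarrow> 'a set" where
  "centraliser G A = {g \<in> carrier G. \<forall>a\<in>A. g \<otimes>\<^bsub>G\<^esub> a = a \<otimes>\<^bsub>G\<^esub> g}"

definition p_group_set :: "nat \<Rightarrow> 'a set \<Rightarrow> bool" where
  "p_group_set p H \<longleftrightarrow> finite H \<and> (\<exists>n. card H = p ^ n)"

end

theory Submission
  imports Defs
begin

lemma (in group) canc1: "a \<in> carrier G \<Longrightarrow> b \<in> carrier G \<Longrightarrow> a \<otimes> (inv a \<otimes> b) = b"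
  by (simp add: m_assoc[symmetric])
lemma (in group) canc2: "a \<in> carrier G \<Longrightarrow> b \<in> carrier G \<Longrightarrow> inv a \<otimes> (a \<otimes> b) = b"
  by (simp add: m_assoc[symmetric])

lemma (in group) centraliser_subgroup:
  assumes "A \<subseteq> carrier G" shows "subgroup (centraliser G A) G"
proof (rule subgroupI)
  show "centraliser G A \<subseteq> carrier G" unfolding centraliser_def by auto
  have "\<one> \<in> centraliser G A" unfolding centraliser_def using assms by auto
  then show "centraliser G A \<noteq> {}" by blast
next
  fix g assume g: "g \<in> centraliser G A"
  then have gc: "g \<in> carrier G" and ga: "\<And>a. a \<in> A \<Longrightarrow> g \<otimes> a = a \<otimes> g" unfolding centraliser_def by auto
  have "inv g \<otimes> a = a \<otimes> inv g" if a: "a \<in> A" for a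
  proof -
    have ac: "a \<in> carrier G" using a assms by auto
    have "inv g \<otimes> a = inv g \<otimes> (a \<otimes> g) \<otimes> inv g" using ac gc by (simp add: m_assoc)
    also have "\<dots> = inv g \<otimes> (g \<otimes> a) \<otimes> inv g" using ga a by simp
    also have "\<dots> = a \<otimes> inv g" using ac gc by (simp add: m_assoc[symmetric])
    finally show ?thesis .
  qed
  then show "inv g \<in> centraliser G A" using gc unfolding centraliser_def by auto
next
  fix g h assume g: "g \<in> centraliser G A" and h: "h \<in> centraliser G A"
  then have gc: "g \<in> carrier G" and ga: "\<And>a. a \<in> A \<Longrightarrow> g \<otimes> a = a \<otimes> g"
    and hc: "h \<in> carrier G" and ha: "\<And>a. a \<in> A \<Longrightarrow> h \<otimes> a = a \<otimes> h" unfolding centraliser_def by auto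
  have "g \<otimes> h \<otimes> a = a \<otimes> (g \<otimes> h)" if a: "a \<in> A" for a
  proof -
    have ac: "a \<in> carrier G" using a assms by auto
    have "g \<otimes> h \<otimes> a = g \<otimes> (a \<otimes> h)" using ac gc hc ha a by (simp add: m_assoc)
    also have "\<dots> = a \<otimes> (g \<otimes> h)" using ac gc hc ga a by (simp add: m_assoc[symmetric])
    finally show ?thesis .
  qed
  then show "g \<otimes> h \<in> centraliser G A" using gc hc unfolding centraliser_def by auto
qed

lemma (in group) centraliser_generate:
  assumes "A \<subseteq> carrier G" "w \<in> centraliser G A"
  shows "w \<in> centraliser G (generate G A)"
proof -
  have wc: "w \<in> carrier G" using assms unfolding centraliser_def by auto
  have "A \<subseteq> centraliser G {w}" using assms unfolding centraliser_def by auto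
  then have "generate G A \<subseteq> centraliser G {w}"
    using generate_subgroup_incl centraliser_subgroup wc by auto
  then show ?thesis using wc unfolding centraliser_def by auto
qed

lemma (in group) commr_inv:
  assumes "a \<in> carrier G" "b \<in> carrier G"
  shows "commr G b a = inv (commr G a b)"
  using assms by (simp add: commr_def inv_mult_group m_assoc)

lemma (in group) comm_sub_subgroup:
  assumes ac: "a \<in> carrier G" and Z: "subgroup Z G" and Q: "subgroup Q G"
    and cm: "\<And>z u. z \<in> Z \<Longrightarrow> u \<in> Q \<Longrightarrow> z \<otimes> u = u \<otimes> z"
  shows "subgroup {z \<in> Z. commr G a z \<in> Q} G"
proof (rule subgroupI)
  have Zc: "Z \<subseteq> carrier G" "Q \<subseteq> carrier G" using Z Q subgroup.subset by auto
  show "{z \<in> Z. commr G a z \<in> Q} \<subseteq> carrier G" using Zc by auto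
  have "commr G a \<one> = \<one>" using ac by (simp add: commr_def)
  then show "{z \<in> Z. commr G a z \<in> Q} \<noteq> {}" using Z Q subgroup.one_closed by fastforce
next
  have Zc: "Z \<subseteq> carrier G" "Q \<subseteq> carrier G" using Z Q subgroup.subset by auto
  fix z assume "z \<in> {z \<in> Z. commr G a z \<in> Q}"
  then have z: "z \<in> Z" and u: "commr G a z \<in> Q" by auto
  define u where "u = commr G a z"
  have zc: "z \<in> carrier G" and uc: "u \<in> carrier G" using z u Zc u_def by auto
  have iuQ: "inv u \<in> Q" unfolding u_def using u Q by (simp add: subgroup.m_inv_closed)
  have iuc: "inv u \<in> carrier G" using uc by simp
  have "commr G a (inv z) = z \<otimes> inv u \<otimes> inv z"
    unfolding u_def commr_def using ac zc by (simp add: m_assoc inv_mult_group canc1)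
  also have "\<dots> = inv u \<otimes> z \<otimes> inv z" using cm[OF z iuQ] by simp
  also have "\<dots> = inv u" using iuc zc by (simp add: m_assoc)
  finally have "commr G a (inv z) = inv u" .
  then show "inv z \<in> {z \<in> Z. commr G a z \<in> Q}"
    using z iuQ Z subgroup.m_inv_closed by fastforce
next
  have Zc: "Z \<subseteq> carrier G" "Q \<subseteq> carrier G" using Z Q subgroup.subset by auto
  fix z w assume "z \<in> {z \<in> Z. commr G a z \<in> Q}" "w \<in> {z \<in> Z. commr G a z \<in> Q}"
  then have z: "z \<in> Z" and u: "commr G a z \<in> Q" and w: "w \<in> Z" and v: "commr G a w \<in> Q" by auto
  define u where "u = commr G a z"
  have zc: "z \<in> carrier G" and uc: "u \<in> carrier G" and wc: "w \<in> carrier G" using z u w Zc u_def by auto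
  have uQ: "u \<in> Q" using u u_def by simp
  have "commr G a (z \<otimes> w) = (inv a \<otimes> inv w \<otimes> a) \<otimes> (u \<otimes> w)"
    unfolding u_def commr_def using ac zc wc by (simp add: m_assoc inv_mult_group canc1)
  also have "\<dots> = (inv a \<otimes> inv w \<otimes> a) \<otimes> (w \<otimes> u)" using cm[OF w uQ] by simp
  also have "\<dots> = commr G a w \<otimes> u" unfolding commr_def using ac wc uc by (simp add: m_assoc)
  finally have "commr G a (z \<otimes> w) = commr G a w \<otimes> u" .
  then show "z \<otimes> w \<in> {z \<in> Z. commr G a z \<in> Q}"
    using z w uQ v Q Z subgroup.m_closed by fastforce
qed

lemma (in group) conj_preimage_subgroup:
  assumes ac: "a \<in> carrier G" and K: "subgroup K G"
  shows "subgroup {z \<in> carrier G. conjg G z a \<in> K} G"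
proof (rule subgroupI)
  show "{z \<in> carrier G. conjg G z a \<in> K} \<subseteq> carrier G" by auto
  have "conjg G \<one> a = \<one>" using ac by (simp add: conjg_def)
  then show "{z \<in> carrier G. conjg G z a \<in> K} \<noteq> {}" using K subgroup.one_closed by fastforce
next
  fix z assume "z \<in> {z \<in> carrier G. conjg G z a \<in> K}"
  then have zc: "z \<in> carrier G" and k: "conjg G z a \<in> K" by auto
  have "conjg G (inv z) a = inv (conjg G z a)"
  proof (rule inv_equality[symmetric])
    show "conjg G (inv z) a \<otimes> conjg G z a = \<one>" using ac zc
      by (simp add: conjg_def m_assoc canc1 canc2)
  qed (use ac zc in \<open>simp_all add: conjg_def\<close>)
  then show "inv z \<in> {z \<in> carrier G. conjg G z a \<in> K}" using zc k K subgroup.m_inv_closed by fastforce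
next
  fix z w assume "z \<in> {z \<in> carrier G. conjg G z a \<in> K}" "w \<in> {z \<in> carrier G. conjg G z a \<in> K}"
  then have zc: "z \<in> carrier G" and k: "conjg G z a \<in> K" and wc: "w \<in> carrier G" and k2: "conjg G w a \<in> K" by auto
  have "conjg G (z \<otimes> w) a = conjg G z a \<otimes> conjg G w a" using ac zc wc
    by (simp add: conjg_def m_assoc canc1)
  then show "z \<otimes> w \<in> {z \<in> carrier G. conjg G z a \<in> K}" using zc wc k k2 K subgroup.m_closed by fastforce
qed

lemma (in group) subgroup_card_dvd:
  assumes "subgroup H G" "subgroup K G" "H \<subseteq> K" "finite K"
  shows "card H dvd card K"
proof -
  interpret K: group "G\<lparr>carrier := K\<rparr>" using assms(2) subgroup_imp_group by blast
  have "subgroup H (G\<lparr>carrier := K\<rparr>)" using subgroup_incl assms by blast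
  then have "card (rcosets\<^bsub>G\<lparr>carrier := K\<rparr>\<^esub> H) * card H = order (G\<lparr>carrier := K\<rparr>)"
    using K.lagrange by blast
  then show ?thesis unfolding order_def by (metis dvd_triv_right partial_object.select_convs(1) partial_object.surjective partial_object.update_convs(1))
qed

lemma (in group) card_set_mult:
  assumes H: "subgroup H G" and K: "subgroup K G" and fH: "finite H" and fK: "finite K"
  shows "card (H <#> K) * card (H \<inter> K) = card H * card K"
proof -
  have Hc: "H \<subseteq> carrier G" and Kc: "K \<subseteq> carrier G" using H K subgroup.subset by auto
  define F where "F z = {(h, k). h \<in> H \<and> k \<in> K \<and> h \<otimes> k = z}" for z
  have U: "H \<times> K = (\<Union>z \<in> H <#> K. F z)"
    unfolding F_def set_mult_def by auto
  have fHK: "finite (H <#> K)" unfolding set_mult_def using fH fK by (simp add: finite_image_set2)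
  have cardF: "card (F z) = card (H \<inter> K)" if z: "z \<in> H <#> K" for z
  proof -
    obtain h0 k0 where h0: "h0 \<in> H" and k0: "k0 \<in> K" and zz: "z = h0 \<otimes> k0"
      using z unfolding set_mult_def by auto
    have h0c: "h0 \<in> carrier G" and k0c: "k0 \<in> carrier G" using h0 k0 Hc Kc by auto
    have "bij_betw (\<lambda>t. (h0 \<otimes> t, inv t \<otimes> k0)) (H \<inter> K) (F z)"
    proof (rule bij_betw_byWitness[where f' = "\<lambda>(h, k). inv h0 \<otimes> h"])
      show "\<forall>t\<in>H \<inter> K. (\<lambda>(h, k). inv h0 \<otimes> h) (h0 \<otimes> t, inv t \<otimes> k0) = t"
        using h0c Hc by (auto simp: canc2)
      show "\<forall>a'\<in>F z. (\<lambda>t. (h0 \<otimes> t, inv t \<otimes> k0)) ((\<lambda>(h, k). inv h0 \<otimes> h) a') = a'"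
      proof
        fix a' assume "a' \<in> F z"
        then obtain h k where a': "a' = (h, k)" and hk: "h \<in> H" "k \<in> K" "h \<otimes> k = z" unfolding F_def by auto
        have hc: "h \<in> carrier G" and kc: "k \<in> carrier G" using hk Hc Kc by auto
        have "inv (inv h0 \<otimes> h) \<otimes> k0 = inv h \<otimes> (h0 \<otimes> k0)"
          using hc h0c k0c by (simp add: inv_mult_group m_assoc)
        also have "\<dots> = inv h \<otimes> (h \<otimes> k)" using hk zz by simp
        also have "\<dots> = k" using hc kc by (simp add: canc2)
        finally show "(\<lambda>t. (h0 \<otimes> t, inv t \<otimes> k0)) ((\<lambda>(h, k). inv h0 \<otimes> h) a') = a'"
          using a' h0c hc by (simp add: canc1)
      qed
      show "(\<lambda>t. (h0 \<otimes> t, inv t \<otimes> k0)) ` (H \<inter> K) \<subseteq> F z"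
      proof
        fix a' assume "a' \<in> (\<lambda>t. (h0 \<otimes> t, inv t \<otimes> k0)) ` (H \<inter> K)"
        then obtain t where t: "t \<in> H" "t \<in> K" and a': "a' = (h0 \<otimes> t, inv t \<otimes> k0)" by auto
        have tc: "t \<in> carrier G" using t Hc by auto
        have "h0 \<otimes> t \<in> H" by (rule subgroup.m_closed[OF H h0 t(1)])
        moreover have "inv t \<otimes> k0 \<in> K" by (rule subgroup.m_closed[OF K subgroup.m_inv_closed[OF K t(2)] k0])
        moreover have "h0 \<otimes> t \<otimes> (inv t \<otimes> k0) = z" using zz h0c k0c tc by (simp add: m_assoc canc1)
        ultimately show "a' \<in> F z" unfolding F_def a' by auto
      qed
      show "(\<lambda>(h, k). inv h0 \<otimes> h) ` F z \<subseteq> H \<inter> K"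
      proof
        fix t assume "t \<in> (\<lambda>(h, k). inv h0 \<otimes> h) ` F z"
        then obtain h k where hk: "h \<in> H" "k \<in> K" "h \<otimes> k = z" and t: "t = inv h0 \<otimes> h" unfolding F_def by auto
        have hc: "h \<in> carrier G" and kc: "k \<in> carrier G" using hk Hc Kc by auto
        have "t \<in> H" unfolding t by (rule subgroup.m_closed[OF H subgroup.m_inv_closed[OF H h0] hk(1)])
        moreover have "t = k0 \<otimes> inv k"
        proof -
          have "h0 \<otimes> k0 = h \<otimes> k" using hk zz by simp
          then have "inv h0 \<otimes> (h0 \<otimes> k0) \<otimes> inv k = inv h0 \<otimes> (h \<otimes> k) \<otimes> inv k" by simp
          then show ?thesis using t hc kc h0c k0c by (simp add: m_assoc canc2)
        qed
        moreover have "k0 \<otimes> inv k \<in> K" by (rule subgroup.m_closed[OF K k0 subgroup.m_inv_closed[OF K hk(2)]])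
        ultimately show "t \<in> H \<inter> K" by simp
      qed
    qed
    then show ?thesis by (rule bij_betw_same_card[symmetric])
  qed
  have "card H * card K = card (H \<times> K)" by (simp add: card_cartesian_product)
  also have "\<dots> = (\<Sum>z \<in> H <#> K. card (F z))" unfolding U
  proof (rule card_UN_disjoint)
    show "finite (H <#> K)" by (rule fHK)
    show "\<forall>i\<in>H <#> K. finite (F i)" using fH fK unfolding F_def
      by (auto intro: finite_subset[of _ "H \<times> K"])
    show "\<forall>i\<in>H <#> K. \<forall>j\<in>H <#> K. i \<noteq> j \<longrightarrow> F i \<inter> F j = {}" unfolding F_def by auto
  qed
  also have "\<dots> = card (H <#> K) * card (H \<inter> K)" using cardF by simp
  finally show ?thesis by simp
qed

lemma pgrp_step:
  fixes p :: nat
  assumes p: "Factorial_Ring.prime p" and sub: "K' \<subseteq> K" and ne: "K' \<noteq> K" and fK: "finite K"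
    and dv: "card K' dvd card K" and cK: "card K = p ^ b"
  shows "p * card K' \<le> card K"
proof -
  obtain c where c: "c \<le> b" "card K' = p ^ c" using dv cK divides_primepow_nat[OF p] by auto
  have "c \<noteq> b"
  proof
    assume "c = b"
    then have "card K' = card K" using c cK by simp
    then show False using card_subset_eq[OF fK sub] ne by simp
  qed
  then have "Suc c \<le> b" using c by simp
  moreover have "p \<ge> 1" using p prime_gt_0_nat by (simp add: Suc_leI)
  ultimately have "p ^ Suc c \<le> p ^ b" using power_increasing[of "Suc c" b p] by blast
  then show ?thesis using c cK by simp
qed

lemma (in group) sub_pgroup:
  fixes p :: nat
  assumes p: "Factorial_Ring.prime p" and H: "subgroup H G" and P: "subgroup P G" and HP: "H \<subseteq> P"
    and fP: "finite P" and cP: "card P = p ^ a"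
  shows "finite H \<and> (\<exists>n. card H = p ^ n)"
proof -
  have "card H dvd p ^ a" using subgroup_card_dvd[OF H P HP fP] cP by simp
  then show ?thesis using divides_primepow_nat[OF p] HP fP finite_subset by blast
qed

lemma (in group) chain_card:
  fixes p :: nat and I :: "'i set" and e :: "'i \<Rightarrow> 'a" and r :: "'i \<Rightarrow> nat"
  assumes p: "Factorial_Ring.prime p" and P: "subgroup P G" and fP: "finite P" and cP: "card P = p ^ a"
    and eP: "e ` I \<subseteq> P" and fI: "finite I" and rinj: "inj_on r I"
    and ind: "\<And>i. i \<in> I \<Longrightarrow> e i \<notin> generate G (e ` {j \<in> I. r j < r i})"
  shows "J \<subseteq> I \<Longrightarrow> inj_on e J \<and> p ^ card J \<le> card (generate G (e ` J))"
proof (induction "card J" arbitrary: J)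
  case 0
  have "finite J" using 0 fI finite_subset by blast
  then have "J = {}" using 0 by simp
  moreover have "card (generate G {}) = 1" using generate_empty by simp
  ultimately show ?case by simp
next
  case (Suc n)
  have fJ: "finite J" using Suc fI finite_subset by blast
  have Jne: "J \<noteq> {}" using Suc by auto
  define m where "m = Max (r ` J)"
  have "m \<in> r ` J" unfolding m_def using fJ Jne by simp
  then obtain i where iJ: "i \<in> J" and ri: "r i = m" by auto
  define J' where "J' = J - {i}"
  have cJ': "card J' = n" unfolding J'_def using Suc iJ fJ by simp
  have J'I: "J' \<subseteq> I" using Suc J'_def by auto
  have IH: "inj_on e J' \<and> p ^ card J' \<le> card (generate G (e ` J'))" using Suc cJ' J'I by blast
  have J'lt: "J' \<subseteq> {j \<in> I. r j < r i}"
  proof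
    fix j assume j: "j \<in> J'"
    then have jJ: "j \<in> J" and ji: "j \<noteq> i" unfolding J'_def by auto
    have "r j \<le> m" unfolding m_def using fJ jJ by simp
    moreover have "r j \<noteq> r i" using rinj ji jJ iJ Suc(3) inj_on_def by (metis subsetD)
    ultimately show "j \<in> {j \<in> I. r j < r i}" using ri jJ Suc(3) by auto
  qed
  have PC: "P \<subseteq> carrier G" using P subgroup.subset by blast
  have eIc: "e ` I \<subseteq> carrier G" using eP PC by blast
  have iI: "i \<in> I" using iJ Suc(3) by blast
  have "generate G (e ` J') \<subseteq> generate G (e ` {j \<in> I. r j < r i})"
    by (rule mono_generate) (use J'lt in blast)
  then have notin: "e i \<notin> generate G (e ` J')" using ind[OF iI] by blast
  have "e ` J' \<subseteq> generate G (e ` J')" by (auto intro: generate.incl)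
  then have eiJ': "e i \<notin> e ` J'" using notin by blast
  have Jeq: "J = insert i J'" unfolding J'_def using iJ by blast
  have "i \<notin> J'" unfolding J'_def by blast
  then have inj: "inj_on e J" using IH eiJ' Jeq by (simp del: insert_Diff_single)
  define K' where "K' = generate G (e ` J')"
  define K where "K = generate G (e ` J)"
  have sub: "K' \<subseteq> K" unfolding K'_def K_def by (rule mono_generate) (auto simp: J'_def)
  have "e i \<in> K" unfolding K_def using iJ by (auto intro: generate.incl)
  then have ne: "K' \<noteq> K" using notin unfolding K'_def by blast
  have eJP: "e ` J \<subseteq> P" "e ` J' \<subseteq> P" using eP Suc(3) J'I by auto
  have KP: "K \<subseteq> P" "K' \<subseteq> P" unfolding K_def K'_def using generate_subgroup_incl[OF _ P] eJP by auto
  have sK: "subgroup K G" "subgroup K' G" unfolding K_def K'_def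
    using generate_is_subgroup eJP PC by auto
  obtain b where cK: "card K = p ^ b" using sub_pgroup[OF p sK(1) P KP(1) fP cP] by blast
  have fK: "finite K" using KP fP finite_subset by blast
  have "card K' dvd card K" using subgroup_card_dvd[OF sK(2) sK(1) sub fK] .
  then have "p * card K' \<le> card K" using pgrp_step[OF p sub ne fK _ cK] by blast
  moreover have "p ^ card J = p * p ^ card J'" using Jeq eiJ' fJ J'_def iJ
    by (metis Suc.hyps(2) cJ' power_Suc)
  ultimately have "p ^ card J \<le> card K" using IH K'_def by (metis dual_order.trans mult_le_mono2)
  then show ?case using inj K_def by simp
qed

lemma (in group) conjg_closed [simp]: "a \<in> carrier G \<Longrightarrow> s \<in> carrier G \<Longrightarrow> conjg G a s \<in> carrier G"
  by (simp add: conjg_def)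

lemma (in group) conjg_mult: "a \<in> carrier G \<Longrightarrow> b \<in> carrier G \<Longrightarrow> s \<in> carrier G \<Longrightarrow>
  conjg G (a \<otimes> b) s = conjg G a s \<otimes> conjg G b s"
  by (simp add: conjg_def m_assoc canc1)

lemma (in group) conjg_inv: "a \<in> carrier G \<Longrightarrow> s \<in> carrier G \<Longrightarrow> conjg G (inv a) s = inv (conjg G a s)"
  by (rule inv_equality[symmetric]) (simp_all add: conjg_def m_assoc canc1 canc2)

lemma (in group) conjg_conjg_inv1: "a \<in> carrier G \<Longrightarrow> s \<in> carrier G \<Longrightarrow> conjg G (conjg G a s) (inv s) = a"
  by (simp add: conjg_def m_assoc canc1 canc2)

lemma (in group) conjg_conjg_inv2: "a \<in> carrier G \<Longrightarrow> s \<in> carrier G \<Longrightarrow> conjg G (conjg G a (inv s)) s = a"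
  by (simp add: conjg_def m_assoc canc1 canc2)

lemma (in group) conjg_inv_s: "a \<in> carrier G \<Longrightarrow> s \<in> carrier G \<Longrightarrow> conjg G a (inv s) = s \<otimes> a \<otimes> inv s"
  by (simp add: conjg_def)

lemma (in group) commr_comm: "a \<in> carrier G \<Longrightarrow> b \<in> carrier G \<Longrightarrow> a \<otimes> b = b \<otimes> a \<Longrightarrow> commr G a b = \<one>"
  unfolding commr_def by (simp add: m_assoc canc2 flip: m_assoc[of a b] )

lemma (in group) normal_in_sub:
  assumes C: "subgroup C G" and K: "subgroup K G" and KC: "K \<subseteq> C"
    and cl: "\<And>c k. c \<in> C \<Longrightarrow> k \<in> K \<Longrightarrow> c \<otimes> k \<otimes> inv c \<in> K"
  shows "K \<lhd> G\<lparr>carrier := C\<rparr>"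
proof -
  interpret C: group "G\<lparr>carrier := C\<rparr>" using C subgroup_imp_group by blast
  have "subgroup K (G\<lparr>carrier := C\<rparr>)" using subgroup_incl[OF K C KC] .
  moreover have "\<forall>c\<in>carrier (G\<lparr>carrier := C\<rparr>). \<forall>k\<in>K.
      c \<otimes>\<^bsub>G\<lparr>carrier := C\<rparr>\<^esub> k \<otimes>\<^bsub>G\<lparr>carrier := C\<rparr>\<^esub> inv\<^bsub>G\<lparr>carrier := C\<rparr>\<^esub> c \<in> K"
    using cl C by simp
  ultimately show ?thesis using C.normal_inv_iff by blast
qed

lemma (in group) in_normalizer:
  assumes c: "c \<in> carrier G" and H: "H \<subseteq> carrier G" and cm: "\<And>h. h \<in> H \<Longrightarrow> c \<otimes> h = h \<otimes> c"
  shows "c \<in> normalizer G H"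
proof -
  have "c <# H #> inv c = H"
  proof -
    have "c <# H #> inv c = (\<lambda>h. c \<otimes> h \<otimes> inv c) ` H" unfolding l_coset_def r_coset_def by auto
    also have "\<dots> = (\<lambda>h. h) ` H"
    proof (rule image_cong[OF refl])
      fix h assume h: "h \<in> H"
      then have hc: "h \<in> carrier G" using H by auto
      show "c \<otimes> h \<otimes> inv c = h" using cm[OF h] hc c by (simp add: m_assoc)
    qed
    finally show ?thesis by simp
  qed
  then show ?thesis unfolding normalizer_def stabilizer_def using c H by simp
qed

lemma (in group) normalizer_conj:
  assumes s: "s \<in> normalizer G H" and H: "H \<subseteq> carrier G" and a: "a \<in> H"
  shows "s \<in> carrier G" "s \<otimes> a \<otimes> inv s \<in> H" "conjg G a s \<in> H"
proof -
  have sc: "s \<in> carrier G" and eq: "s <# H #> inv s = H"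
    using s H unfolding normalizer_def stabilizer_def by auto
  show "s \<in> carrier G" by (rule sc)
  have "s \<otimes> a \<otimes> inv s \<in> s <# H #> inv s" unfolding l_coset_def r_coset_def using a by auto
  then show "s \<otimes> a \<otimes> inv s \<in> H" using eq by simp
  have "a \<in> s <# H #> inv s" using a eq by simp
  then obtain b where b: "b \<in> H" "a = s \<otimes> b \<otimes> inv s" unfolding l_coset_def r_coset_def by auto
  have "conjg G a s = b" using b H sc by (auto simp: conjg_def m_assoc canc1 canc2)
  then show "conjg G a s \<in> H" using b by simp
qed

theorem lemma2p2:
  fixes G (structure)
    and p k :: nat
    and x y l \<sigma> :: 'a
    and g h :: "nat \<Rightarrow> 'a"
    and N :: "'a set"
  assumes grp: "group G"
    and fin: "finite (carrier G)"
    and p_prime: "Factorial_Ring.prime p"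
    and x_in: "x \<in> carrier G"
    and x_ord: "group.ord G x = p"
    and N_normal: "N \<lhd> (G\<lparr>carrier := normalizer G (generate G {x})\<rparr>)"
    and N_card: "card N = p ^ (2 * k + 3)"
    and x_N: "x \<in> N"
    and y_in: "y \<in> N \<inter> centraliser G {x}" and y_ord: "group.ord G y = p"
    and l_in: "l \<in> N \<inter> centraliser G {x}" and l_ord: "group.ord G l = p"
    and g_in: "\<And>i. i \<in> {1..k} \<Longrightarrow> g i \<in> N \<inter> centraliser G {x}"
    and g_ord: "\<And>i. i \<in> {1..k} \<Longrightarrow> group.ord G (g i) = p"
    and h_in: "\<And>i. i \<in> {1..k} \<Longrightarrow> h i \<in> N \<inter> centraliser G {x}"
    and h_ord: "\<And>i. i \<in> {1..k} \<Longrightarrow> group.ord G (h i) = p"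
    and \<sigma>_in: "\<sigma> \<in> normalizer G (generate G {x, y})"
    and i: "y \<notin> generate G {x}"
    and ii_g: "\<And>i. i \<in> {1..k} \<Longrightarrow> g i \<otimes> y = y \<otimes> g i"
    and ii_h: "\<And>i. i \<in> {1..k} \<Longrightarrow> h i \<otimes> y = y \<otimes> h i"
    and ii_l: "l \<otimes> y \<noteq> y \<otimes> l"
    and iii: "\<And>i j. i \<in> {1..k} \<Longrightarrow> j \<in> {1..k} \<Longrightarrow>
                 comm_mod G x (g j) (g i) \<and> comm_mod G x (g j) (conjg G (g i) \<sigma>)
                 \<and> comm_mod G x (g j) (h i)"
    and iv1: "\<And>i j. i \<in> {1..k} \<Longrightarrow> j \<in> {1..k} \<Longrightarrow> i < j \<Longrightarrow>
                 comm_mod G x (g j) (conjg G (h i) \<sigma>)"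
    and iv2: "\<And>i. i \<in> {1..k} \<Longrightarrow> \<not> comm_mod G x (g i) (conjg G (h i) \<sigma>)"
  shows "(\<forall>S. S \<subseteq> {x, y} \<union> g ` {1..k} \<union> h ` {1..k} \<union> (\<lambda>i. conjg G (h i) \<sigma>) ` {1..k}
             \<longrightarrow> p_group_set p (generate G S) \<and> card (generate G S) \<ge> p ^ card S)
       \<and> N = generate G ({x, y, l} \<union> g ` {1..k} \<union> h ` {1..k})
       \<and> (let H = generate G ({x, y} \<union> g ` {1..k} \<union> h ` {1..k}
                      \<union> (\<lambda>i. conjg G (g i) \<sigma>) ` {1..k} \<union> (\<lambda>i. conjg G (h i) \<sigma>) ` {1..k})
          in H \<lhd> (G\<lparr>carrier := centraliser G (generate G {x, y})\<rparr>) \<and> p_group_set p H)"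
proof -
  interpret group G by (rule grp)
  have xc: "x \<in> carrier G" by (rule x_in)
  have p1: "p > 1" using p_prime prime_gt_1_nat by blast
  define Nor where "Nor = normalizer G (generate G {x})"
  have gxc: "generate G {x} \<subseteq> carrier G" using generate_incl xc by blast
  have NorS: "subgroup Nor G" unfolding Nor_def using normalizer_imp_subgroup[OF gxc] .
  have NN: "N \<lhd> G\<lparr>carrier := Nor\<rparr>" using N_normal unfolding Nor_def .
  have NsubNor: "subgroup N (G\<lparr>carrier := Nor\<rparr>)" using normal_imp_subgroup[OF NN] .
  have NS: "subgroup N G" using incl_subgroup[OF NorS NsubNor] .
  have Nc: "N \<subseteq> carrier G" using NS subgroup.subset by blast
  have fN: "finite N" using fin Nc finite_subset by blast
  have Nconj: "c \<otimes> n \<otimes> inv c \<in> N" if c: "c \<in> Nor" and n: "n \<in> N" for c n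
  proof -
    have "c \<otimes> n \<otimes> inv\<^bsub>G\<lparr>carrier := Nor\<rparr>\<^esub> c \<in> N"
      using normal.inv_op_closed2[OF NN, of c n] c n by simp
    then show ?thesis using m_inv_consistent[OF NorS c] by simp
  qed
  have yc: "y \<in> carrier G" using y_in Nc by blast
  have lc: "l \<in> carrier G" using l_in Nc by blast
  have gc: "g i \<in> carrier G" if "i \<in> {1..k}" for i using g_in[OF that] Nc by blast
  have hc: "h i \<in> carrier G" if "i \<in> {1..k}" for i using h_in[OF that] Nc by blast
  define X2 where "X2 = generate G {x, y}"
  define C where "C = centraliser G X2"
  have xyc: "{x, y} \<subseteq> carrier G" using xc yc by blast
  have X2c: "X2 \<subseteq> carrier G" unfolding X2_def using generate_incl[OF xyc] .
  have X2S: "subgroup X2 G" unfolding X2_def using generate_is_subgroup[OF xyc] .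
  have CS: "subgroup C G" unfolding C_def using centraliser_subgroup[OF X2c] .
  have Cc: "C \<subseteq> carrier G" using CS subgroup.subset by blast
  have xX2: "x \<in> X2" "y \<in> X2" unfolding X2_def by (auto intro: generate.incl)
  have gxX2: "generate G {x} \<subseteq> X2" unfolding X2_def by (rule mono_generate) blast
  have inC: "w \<in> C" if "w \<in> carrier G" "w \<otimes> x = x \<otimes> w" "w \<otimes> y = y \<otimes> w" for w
  proof -
    have "w \<in> centraliser G {x, y}" unfolding centraliser_def using that by auto
    then show ?thesis unfolding C_def X2_def using centraliser_generate[OF xyc] by blast
  qed
  have Ccomm: "c \<otimes> u = u \<otimes> c" if "c \<in> C" "u \<in> X2" for c u
    using that unfolding C_def centraliser_def by auto
  have yx: "y \<otimes> x = x \<otimes> y" using y_in unfolding centraliser_def by auto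
  have xC: "x \<in> C" using inC[OF xc] yx by simp
  have yC: "y \<in> C" using inC[OF yc] yx by simp
  have gC: "g i \<in> C" if i: "i \<in> {1..k}" for i
    using inC[OF gc[OF i]] g_in[OF i] ii_g[OF i] unfolding centraliser_def by auto
  have hC: "h i \<in> C" if i: "i \<in> {1..k}" for i
    using inC[OF hc[OF i]] h_in[OF i] ii_h[OF i] unfolding centraliser_def by auto
  have lnC: "l \<notin> C" using Ccomm[of l y] xX2 ii_l by metis
  have CNor: "C \<subseteq> Nor"
  proof
    fix c assume c: "c \<in> C"
    show "c \<in> Nor" unfolding Nor_def
      by (rule in_normalizer) (use c Cc gxc gxX2 Ccomm in auto)
  qed
  have sc: "\<sigma> \<in> carrier G" using normalizer_conj(1)[OF \<sigma>_in X2c[unfolded X2_def]] xX2 unfolding X2_def by blast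
  have sX2: "conjg G a \<sigma> \<in> X2" if "a \<in> X2" for a
    using normalizer_conj(3)[OF \<sigma>_in X2c[unfolded X2_def]] that unfolding X2_def by blast
  have sX2': "\<sigma> \<otimes> a \<otimes> inv \<sigma> \<in> X2" if "a \<in> X2" for a
    using normalizer_conj(2)[OF \<sigma>_in X2c[unfolded X2_def]] that unfolding X2_def by blast
  have sC: "conjg G c \<sigma> \<in> C" if c: "c \<in> C" for c
  proof -
    have cc: "c \<in> carrier G" using c Cc by blast
    have "conjg G c \<sigma> \<otimes> a = a \<otimes> conjg G c \<sigma>" if a: "a \<in> X2" for a
    proof -
      have ac: "a \<in> carrier G" using a X2c by blast
      define b where "b = \<sigma> \<otimes> a \<otimes> inv \<sigma>"
      have b: "b \<in> X2" unfolding b_def using sX2'[OF a] .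
      have bc: "b \<in> carrier G" using b X2c by blast
      have ab: "a = conjg G b \<sigma>" unfolding b_def conjg_def using ac sc by (simp add: m_assoc canc1 canc2)
      have "conjg G c \<sigma> \<otimes> a = conjg G (c \<otimes> b) \<sigma>" using ab conjg_mult cc bc sc by simp
      also have "\<dots> = conjg G (b \<otimes> c) \<sigma>" using Ccomm[OF c b] by simp
      also have "\<dots> = a \<otimes> conjg G c \<sigma>" using ab conjg_mult cc bc sc by simp
      finally show ?thesis .
    qed
    then show ?thesis unfolding C_def centraliser_def using cc sc by simp
  qed
  have sC': "conjg G c (inv \<sigma>) \<in> C" if c: "c \<in> C" for c
  proof -
    have cc: "c \<in> carrier G" using c Cc by blast
    have "conjg G c (inv \<sigma>) \<otimes> a = a \<otimes> conjg G c (inv \<sigma>)" if a: "a \<in> X2" for a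
    proof -
      have ac: "a \<in> carrier G" using a X2c by blast
      define b where "b = conjg G a \<sigma>"
      have b: "b \<in> X2" unfolding b_def using sX2[OF a] .
      have bc: "b \<in> carrier G" using b X2c by blast
      have ab: "a = conjg G b (inv \<sigma>)" unfolding b_def using conjg_conjg_inv1 ac sc by simp
      have "conjg G c (inv \<sigma>) \<otimes> a = conjg G (c \<otimes> b) (inv \<sigma>)" using ab conjg_mult cc bc sc by simp
      also have "\<dots> = conjg G (b \<otimes> c) (inv \<sigma>)" using Ccomm[OF c b] by simp
      also have "\<dots> = a \<otimes> conjg G c (inv \<sigma>)" using ab conjg_mult cc bc sc by simp
      finally show ?thesis .
    qed
    then show ?thesis unfolding C_def centraliser_def using cc sc by simp
  qed
  define M where "M = N \<inter> C"
  have MS: "subgroup M G" unfolding M_def using subgroup_Int[OF NS CS] .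
  have MC: "M \<subseteq> C" unfolding M_def by blast
  have Mc: "M \<subseteq> carrier G" using MC Cc by blast
  have fM: "finite M" using fN M_def by simp
  have Mnorm: "c \<otimes> m \<otimes> inv c \<in> M" if c: "c \<in> C" and m: "m \<in> M" for c m
  proof -
    have icC: "inv c \<in> C" using subgroup.m_inv_closed[OF CS c] .
    have "c \<otimes> m \<otimes> inv c \<in> N" using Nconj[of c m] c CNor m M_def by blast
    moreover have "c \<otimes> m \<otimes> inv c \<in> C"
      using c m MC icC subgroup.m_closed[OF CS] by blast
    ultimately show ?thesis unfolding M_def by blast
  qed
  have MN: "M \<lhd> G\<lparr>carrier := C\<rparr>" using normal_in_sub[OF CS MS MC Mnorm] by blast
  obtain bM where cM: "card M = p ^ bM"
    using sub_pgroup[OF p_prime MS NS _ fN N_card] M_def by blast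
  define Ms where "Ms = {z \<in> carrier G. conjg G z (inv \<sigma>) \<in> M}"
  have MsS: "subgroup Ms G" unfolding Ms_def using conj_preimage_subgroup[OF _ MS] sc by simp
  have Msc: "Ms \<subseteq> carrier G" unfolding Ms_def by blast
  have inMs: "conjg G m \<sigma> \<in> Ms" if "m \<in> M" for m
    using that Mc sc conjg_conjg_inv1 unfolding Ms_def by auto
  have MsC: "Ms \<subseteq> C"
  proof
    fix z assume z: "z \<in> Ms"
    then have "conjg G z (inv \<sigma>) \<in> C" and zc: "z \<in> carrier G" using MC unfolding Ms_def by auto
    then have "conjg G (conjg G z (inv \<sigma>)) \<sigma> \<in> C" using sC by blast
    then show "z \<in> C" using conjg_conjg_inv2 zc sc by simp
  qed
  have cMs: "card Ms = card M"
  proof -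
    have "bij_betw (\<lambda>z. conjg G z (inv \<sigma>)) Ms M"
    proof (rule bij_betw_byWitness[where f' = "\<lambda>z. conjg G z \<sigma>"])
      show "\<forall>a\<in>Ms. conjg G (conjg G a (inv \<sigma>)) \<sigma> = a" using Msc sc conjg_conjg_inv2 by auto
      show "\<forall>a\<in>M. conjg G (conjg G a \<sigma>) (inv \<sigma>) = a" using Mc sc conjg_conjg_inv1 by auto
      show "(\<lambda>z. conjg G z (inv \<sigma>)) ` Ms \<subseteq> M" unfolding Ms_def by auto
      show "(\<lambda>z. conjg G z \<sigma>) ` M \<subseteq> Ms" using inMs by auto
    qed
    then show ?thesis by (rule bij_betw_same_card)
  qed
  have Msnorm: "c \<otimes> z \<otimes> inv c \<in> Ms" if c: "c \<in> C" and z: "z \<in> Ms" for c z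
  proof -
    have cc: "c \<in> carrier G" using c Cc by blast
    have zc: "z \<in> carrier G" using z Msc by blast
    have "conjg G (c \<otimes> z \<otimes> inv c) (inv \<sigma>)
        = conjg G c (inv \<sigma>) \<otimes> conjg G z (inv \<sigma>) \<otimes> inv (conjg G c (inv \<sigma>))"
      using cc zc sc by (simp add: conjg_mult conjg_inv)
    also have "\<dots> \<in> M" using Mnorm[OF sC'[OF c]] z unfolding Ms_def by blast
    finally show ?thesis unfolding Ms_def using cc zc by simp
  qed
  have MsN: "Ms \<lhd> G\<lparr>carrier := C\<rparr>" using normal_in_sub[OF CS MsS MsC Msnorm] by blast
  define P where "P = M <#> Ms"
  have PN: "P \<lhd> G\<lparr>carrier := C\<rparr>"
  proof -
    interpret GC: group "G\<lparr>carrier := C\<rparr>" using CS subgroup_imp_group by blast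
    have "M <#>\<^bsub>G\<lparr>carrier := C\<rparr>\<^esub> Ms \<lhd> G\<lparr>carrier := C\<rparr>"
      using GC.normal_subgroup_set_mult_closed[OF MN MsN] .
    moreover have "M <#>\<^bsub>G\<lparr>carrier := C\<rparr>\<^esub> Ms = P" unfolding P_def set_mult_def by simp
    ultimately show ?thesis by simp
  qed
  have PS: "subgroup P G"
    using incl_subgroup[OF CS normal_imp_subgroup[OF PN]] .
  have fMs: "finite Ms" using fin Msc finite_subset by blast
  have "card P * card (M \<inter> Ms) = card M * card Ms" unfolding P_def using card_set_mult[OF MS MsS fM fMs] .
  then have "card P dvd p ^ (bM + bM)" using cM cMs by (metis dvd_triv_left power_add)
  then obtain aP where cP: "card P = p ^ aP" using divides_primepow_nat[OF p_prime] by blast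
  have Pc: "P \<subseteq> carrier G" using PS subgroup.subset by blast
  have fP: "finite P" using fin Pc finite_subset by blast
  have MP: "M \<subseteq> P" unfolding P_def set_mult_def using subgroup.one_closed[OF MsS] Mc by force
  have MsP: "Ms \<subseteq> P" unfolding P_def set_mult_def using subgroup.one_closed[OF MS] Msc by force
  define Xg where "Xg = generate G {x}"
  have XgS: "subgroup Xg G" unfolding Xg_def using generate_is_subgroup xc by simp
  have one_Xg: "\<one> \<in> Xg" using subgroup.one_closed[OF XgS] .
  have cmX: "z \<otimes> u = u \<otimes> z" if "z \<in> C" "u \<in> Xg" for z u
    using Ccomm that gxX2 Xg_def by blast
  define hs where "hs i = conjg G (h i) \<sigma>" for i
  define gs where "gs i = conjg G (g i) \<sigma>" for i
  have hsC: "hs i \<in> C" if "i \<in> {1..k}" for i unfolding hs_def using sC hC that by blast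
  have gsC: "gs i \<in> C" if "i \<in> {1..k}" for i unfolding gs_def using sC gC that by blast
  have hsc: "hs i \<in> carrier G" if "i \<in> {1..k}" for i using hsC that Cc by blast
  have gsc: "gs i \<in> carrier G" if "i \<in> {1..k}" for i using gsC that Cc by blast
  have commr_C1: "commr G c a = \<one>" if "c \<in> C" "a \<in> X2" for c a
    using commr_comm Ccomm that Cc X2c by blast
  have cm_inv: "commr G b a \<in> Xg" if "commr G a b \<in> Xg" "a \<in> carrier G" "b \<in> carrier G" for a b
    using commr_inv[OF that(2,3)] subgroup.m_inv_closed[OF XgS that(1)] by simp
  have cm_inv': "commr G a b \<in> Xg" if "commr G b a \<in> Xg" "a \<in> carrier G" "b \<in> carrier G" for a b
    using cm_inv that by blast
  define A where "A i = {z \<in> C. commr G (hs i) z \<in> Xg}" for i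
  have AS: "subgroup (A i) G" if "i \<in> {1..k}" for i
    unfolding A_def using comm_sub_subgroup[OF hsc[OF that] CS XgS cmX] by blast
  define A' where "A' i = {z \<in> C. commr G (g i) z \<in> Xg}" for i
  have A'S: "subgroup (A' i) G" if "i \<in> {1..k}" for i
    unfolding A'_def using comm_sub_subgroup[OF gc[OF that] CS XgS cmX] by blast
  define B where "B i = C \<inter> {z \<in> carrier G. conjg G z \<sigma> \<in> A' i}" for i
  have BS: "subgroup (B i) G" if "i \<in> {1..k}" for i
    unfolding B_def using subgroup_Int[OF CS conj_preimage_subgroup[OF sc A'S[OF that]]] .
  define I :: "(nat \<times> nat) set" where
    "I = {(0,0),(1,0)} \<union> Pair 2 ` {1..k} \<union> Pair 3 ` {1..k} \<union> Pair 4 ` {1..k}"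
  define e where "e = (\<lambda>(a::nat, i::nat). if a = 0 then x else if a = 1 then y else if a = 2 then g i
                       else if a = 3 then h i else hs i)"
  define r where "r = (\<lambda>(a::nat, i::nat). if a = 0 then 0 else if a = 1 then 1 else if a = 2 then k + 2 - i
                       else if a = 3 then k + 1 + i else 2 * k + 1 + i)"
  have fI: "finite I" unfolding I_def by simp
  have eI: "e ` I = {x, y} \<union> g ` {1..k} \<union> h ` {1..k} \<union> hs ` {1..k}"
    unfolding I_def e_def by (auto simp: image_image image_Un)
  have rinj: "inj_on r I"
    unfolding I_def r_def inj_on_def by auto
  have eIP: "e ` I \<subseteq> P"
    unfolding eI using MP MsP xC yC gC hC x_N y_in g_in h_in inMs h_in hC hs_def M_def by auto
  have Icases: "\<And>m Q. m \<in> I \<Longrightarrow> (m = (0,0) \<Longrightarrow> Q) \<Longrightarrow> (m = (1,0) \<Longrightarrow> Q)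
      \<Longrightarrow> (\<And>j. j \<in> {1..k} \<Longrightarrow> m = (2,j) \<Longrightarrow> Q) \<Longrightarrow> (\<And>j. j \<in> {1..k} \<Longrightarrow> m = (3,j) \<Longrightarrow> Q)
      \<Longrightarrow> (\<And>j. j \<in> {1..k} \<Longrightarrow> m = (4,j) \<Longrightarrow> Q) \<Longrightarrow> Q"
    unfolding I_def by blast
  have cmXg: "commr G a b \<in> Xg \<longleftrightarrow> comm_mod G x a b" for a b
    unfolding comm_mod_def Xg_def by simp
  have x1: "x \<noteq> \<one>" using x_ord p1 ord_id by auto
  have ind: "e i \<notin> generate G (e ` {j \<in> I. r j < r i})" if iI: "i \<in> I" for i
  proof (rule Icases[OF iI])
    assume i: "i = (0,0)"
    have "{j \<in> I. r j < r i} = {}" using i unfolding r_def by auto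
    then have "generate G (e ` {j \<in> I. r j < r i}) = {\<one>}" using generate_empty by (simp only: image_empty)
    moreover have "e i = x" using i unfolding e_def by simp
    ultimately show ?thesis using x1 by simp
  next
    assume i: "i = (1,0)"
    have "{j \<in> I. r j < r i} = {(0,0)}" using i unfolding r_def I_def by auto
    then show ?thesis using i \<open>y \<notin> generate G {x}\<close> unfolding e_def by simp
  next
    fix j assume j: "j \<in> {1..k}" and i: "i = (2,j)"
    have "e ` {m \<in> I. r m < r i} \<subseteq> A j"
    proof
      fix z assume "z \<in> e ` {m \<in> I. r m < r i}"
      then obtain m where m: "m \<in> I" "r m < r i" "z = e m" by auto
      show "z \<in> A j"
      proof (rule Icases[OF m(1)])
        assume "m = (0,0)" then show ?thesis using m xC commr_C1[OF hsC[OF j] xX2(1)] one_Xg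
          unfolding A_def e_def by simp
      next
        assume "m = (1,0)" then show ?thesis using m yC commr_C1[OF hsC[OF j] xX2(2)] one_Xg
          unfolding A_def e_def by simp
      next
        fix j' assume j': "j' \<in> {1..k}" and mm: "m = (2,j')"
        then have "j < j'" using m(2) i j unfolding r_def by auto
        then have "comm_mod G x (g j') (hs j)" using iv1[OF j j'] unfolding hs_def by blast
        then have "commr G (hs j) (g j') \<in> Xg" using cm_inv cmXg gc[OF j'] hsc[OF j] by blast
        then show ?thesis using mm m gC[OF j'] unfolding A_def e_def by simp
      next
        fix j' assume j': "j' \<in> {1..k}" and mm: "m = (3,j')"
        then show ?thesis using m(2) i j unfolding r_def by auto
      next
        fix j' assume j': "j' \<in> {1..k}" and mm: "m = (4,j')"
        then show ?thesis using m(2) i j unfolding r_def by auto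
      qed
    qed
    then have "generate G (e ` {m \<in> I. r m < r i}) \<subseteq> A j" using generate_subgroup_incl AS[OF j] by blast
    moreover have "g j \<notin> A j"
    proof
      assume "g j \<in> A j"
      then have "commr G (hs j) (g j) \<in> Xg" unfolding A_def by blast
      then have "comm_mod G x (g j) (hs j)" using cm_inv cmXg gc[OF j] hsc[OF j] by blast
      then show False using iv2[OF j] unfolding hs_def by blast
    qed
    ultimately show ?thesis using i unfolding e_def by auto
  next
    fix j assume j: "j \<in> {1..k}" and i: "i = (3,j)"
    have inB: "z \<in> B j" if "z \<in> C" "commr G (g j) (conjg G z \<sigma>) \<in> Xg" for z
      using that sC Cc unfolding B_def A'_def by auto
    have "e ` {m \<in> I. r m < r i} \<subseteq> B j"
    proof
      fix z assume "z \<in> e ` {m \<in> I. r m < r i}"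
      then obtain m where m: "m \<in> I" "r m < r i" "z = e m" by auto
      show "z \<in> B j"
      proof (rule Icases[OF m(1)])
        assume "m = (0,0)" then show ?thesis using m xC commr_C1[OF gC[OF j] sX2[OF xX2(1)]] one_Xg inB
          unfolding e_def by simp
      next
        assume "m = (1,0)" then show ?thesis using m yC commr_C1[OF gC[OF j] sX2[OF xX2(2)]] one_Xg inB
          unfolding e_def by simp
      next
        fix j' assume j': "j' \<in> {1..k}" and mm: "m = (2,j')"
        have "comm_mod G x (g j) (conjg G (g j') \<sigma>)" using iii[OF j' j] by blast
        then show ?thesis using mm m gC[OF j'] inB cmXg unfolding e_def by simp
      next
        fix j' assume j': "j' \<in> {1..k}" and mm: "m = (3,j')"
        then have "j' < j" using m(2) i j unfolding r_def by auto
        then have "comm_mod G x (g j) (conjg G (h j') \<sigma>)" using iv1[OF j' j] by blast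
        then show ?thesis using mm m hC[OF j'] inB cmXg unfolding e_def by simp
      next
        fix j' assume j': "j' \<in> {1..k}" and mm: "m = (4,j')"
        then show ?thesis using m(2) i j unfolding r_def by auto
      qed
    qed
    then have "generate G (e ` {m \<in> I. r m < r i}) \<subseteq> B j" using generate_subgroup_incl BS[OF j] by blast
    moreover have "h j \<notin> B j"
    proof
      assume "h j \<in> B j"
      then have "commr G (g j) (conjg G (h j) \<sigma>) \<in> Xg" unfolding B_def A'_def by blast
      then show False using iv2[OF j] cmXg by blast
    qed
    ultimately show ?thesis using i unfolding e_def by auto
  next
    fix j assume j: "j \<in> {1..k}" and i: "i = (4,j)"
    have "e ` {m \<in> I. r m < r i} \<subseteq> A' j"
    proof
      fix z assume "z \<in> e ` {m \<in> I. r m < r i}"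
      then obtain m where m: "m \<in> I" "r m < r i" "z = e m" by auto
      show "z \<in> A' j"
      proof (rule Icases[OF m(1)])
        assume "m = (0,0)" then show ?thesis using m xC commr_C1[OF gC[OF j] xX2(1)] one_Xg
          unfolding A'_def e_def by simp
      next
        assume "m = (1,0)" then show ?thesis using m yC commr_C1[OF gC[OF j] xX2(2)] one_Xg
          unfolding A'_def e_def by simp
      next
        fix j' assume j': "j' \<in> {1..k}" and mm: "m = (2,j')"
        have "comm_mod G x (g j) (g j')" using iii[OF j' j] by blast
        then show ?thesis using mm m gC[OF j'] cmXg unfolding A'_def e_def by simp
      next
        fix j' assume j': "j' \<in> {1..k}" and mm: "m = (3,j')"
        have "comm_mod G x (g j) (h j')" using iii[OF j' j] by blast
        then show ?thesis using mm m hC[OF j'] cmXg unfolding A'_def e_def by simp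
      next
        fix j' assume j': "j' \<in> {1..k}" and mm: "m = (4,j')"
        then have "j' < j" using m(2) i j unfolding r_def by auto
        then have "comm_mod G x (g j) (conjg G (h j') \<sigma>)" using iv1[OF j' j] by blast
        then show ?thesis using mm m hsC[OF j'] cmXg unfolding A'_def e_def hs_def by simp
      qed
    qed
    then have "generate G (e ` {m \<in> I. r m < r i}) \<subseteq> A' j" using generate_subgroup_incl A'S[OF j] by blast
    moreover have "hs j \<notin> A' j"
    proof
      assume "hs j \<in> A' j"
      then have "commr G (g j) (hs j) \<in> Xg" unfolding A'_def by blast
      then show False using iv2[OF j] cmXg unfolding hs_def by blast
    qed
    ultimately show ?thesis using i unfolding e_def by auto
  qed
  have chain: "inj_on e J \<and> p ^ card J \<le> card (generate G (e ` J))" if "J \<subseteq> I" for J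
    using chain_card[OF p_prime PS fP cP eIP fI rinj ind that] by blast
  have partA: "\<forall>S. S \<subseteq> {x, y} \<union> g ` {1..k} \<union> h ` {1..k} \<union> (\<lambda>i. conjg G (h i) \<sigma>) ` {1..k}
             \<longrightarrow> p_group_set p (generate G S) \<and> card (generate G S) \<ge> p ^ card S"
  proof (intro allI impI)
    fix S assume S: "S \<subseteq> {x, y} \<union> g ` {1..k} \<union> h ` {1..k} \<union> (\<lambda>i. conjg G (h i) \<sigma>) ` {1..k}"
    then have SeI: "S \<subseteq> e ` I" using eI unfolding hs_def by simp
    define J where "J = {j \<in> I. e j \<in> S}"
    have JI: "J \<subseteq> I" unfolding J_def by blast
    have eJ: "e ` J = S" using SeI unfolding J_def by blast
    have ch: "inj_on e J" "p ^ card J \<le> card (generate G (e ` J))" using chain[OF JI] by auto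
    have cS: "card S = card J" using card_image[OF ch(1)] eJ by simp
    have SP: "S \<subseteq> P" using SeI eIP by blast
    have gS: "subgroup (generate G S) G" using generate_is_subgroup SP Pc by blast
    have "generate G S \<subseteq> P" using generate_subgroup_incl[OF SP PS] .
    then have "finite (generate G S) \<and> (\<exists>n. card (generate G S) = p ^ n)"
      using sub_pgroup[OF p_prime gS PS _ fP cP] by blast
    then show "p_group_set p (generate G S) \<and> card (generate G S) \<ge> p ^ card S"
      unfolding p_group_set_def using ch eJ cS by simp
  qed
  define J0 :: "(nat \<times> nat) set" where "J0 = {(0,0),(1,0)} \<union> Pair 2 ` {1..k} \<union> Pair 3 ` {1..k}"
  have J0I: "J0 \<subseteq> I" unfolding J0_def I_def by blast
  define T0 where "T0 = {x, y} \<union> g ` {1..k} \<union> h ` {1..k}"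
  have eJ0: "e ` J0 = T0" unfolding J0_def T0_def e_def by (auto simp: image_image image_Un)
  have c1: "card (Pair (2::nat) ` {1..k}) = k" proof -
    have "inj_on (Pair (2::nat)) {1..k}" by (simp add: inj_on_def)
    then show ?thesis using card_image by fastforce
  qed
  have c2: "card (Pair (3::nat) ` {1..k}) = k" proof -
    have "inj_on (Pair (3::nat)) {1..k}" by (simp add: inj_on_def)
    then show ?thesis using card_image by fastforce
  qed
  have c3: "card ({(0::nat,0::nat),(1,0)} \<union> Pair 2 ` {1..k}) = 2 + k"
  proof -
    have "card ({(0::nat,0::nat),(1,0)} \<union> Pair 2 ` {1..k}) = card {(0::nat,0::nat),(1,0)} + card (Pair (2::nat) ` {1..k})"
      by (rule card_Un_disjoint) auto
    then show ?thesis using c1 by simp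
  qed
  have cJ0: "card J0 = 2 * k + 2" unfolding J0_def
  proof -
    have "card ({(0::nat,0::nat),(1,0)} \<union> Pair 2 ` {1..k} \<union> Pair 3 ` {1..k})
       = card ({(0::nat,0::nat),(1,0)} \<union> Pair 2 ` {1..k}) + card (Pair (3::nat) ` {1..k})"
      by (rule card_Un_disjoint) auto
    then show "card ({(0::nat,0::nat),(1,0)} \<union> Pair 2 ` {1..k} \<union> Pair 3 ` {1..k}) = 2 * k + 2"
      using c2 c3 by simp
  qed
  define M0 where "M0 = generate G T0"
  have cM0: "p ^ (2 * k + 2) \<le> card M0" using chain[OF J0I] eJ0 cJ0 unfolding M0_def by simp
  have T0M: "T0 \<subseteq> M" unfolding T0_def M_def using x_N xC y_in yC g_in gC h_in hC by auto
  have M0M: "M0 \<subseteq> M" unfolding M0_def using generate_subgroup_incl[OF T0M MS] .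
  have MN: "M \<subseteq> N" unfolding M_def by blast
  have lM: "l \<notin> M" using lnC M_def by blast
  have "card M < card N" using psubset_card_mono[OF fN] MN lM l_in by blast
  then have "p ^ bM < p ^ (2 * k + 3)" using cM N_card by simp
  then have "bM < 2 * k + 3" using power_less_imp_less_exp p1 by blast
  then have "p ^ bM \<le> p ^ (2 * k + 2)" using power_increasing[of bM "2*k+2" p] p1 by simp
  then have cMle: "card M \<le> card M0" using cM cM0 by simp
  have M0eq: "M0 = M" using card_seteq[OF fM M0M cMle] .
  have cM2: "card M = p ^ (2 * k + 2)" using cMle cM0 M0eq \<open>p ^ bM \<le> p ^ (2 * k + 2)\<close> cM by simp
  define T1 where "T1 = {x, y, l} \<union> g ` {1..k} \<union> h ` {1..k}"
  define Nl where "Nl = generate G T1"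
  have T1N: "T1 \<subseteq> N" unfolding T1_def using x_N y_in l_in g_in h_in by auto
  have NlN: "Nl \<subseteq> N" unfolding Nl_def using generate_subgroup_incl[OF T1N NS] .
  have NlS: "subgroup Nl G" unfolding Nl_def using generate_is_subgroup T1N Nc by blast
  have MNl: "M \<subseteq> Nl" using M0eq unfolding M0_def Nl_def T0_def T1_def by (metis mono_generate Un_mono insert_mono subset_insertI order_refl)
  have lNl: "l \<in> Nl" unfolding Nl_def T1_def by (auto intro: generate.incl)
  have fNl: "finite Nl" using NlN fN finite_subset by blast
  obtain cNl where cNl: "card Nl = p ^ cNl" using sub_pgroup[OF p_prime NlS NS NlN fN N_card] by blast
  have "p * card M \<le> card Nl"
    using pgrp_step[OF p_prime MNl _ fNl subgroup_card_dvd[OF MS NlS MNl fNl] cNl] lNl lM by blast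
  moreover have "p * card M = card N"
  proof -
    have "(2::nat) * k + 3 = Suc (2 * k + 2)" by simp
    then have "p ^ (2 * k + 3) = p * p ^ (2 * k + 2)" by (simp only: power_Suc)
    then show ?thesis using cM2 N_card by (simp only:)
  qed
  ultimately have "card N \<le> card Nl" by simp
  then have partB: "N = generate G ({x, y, l} \<union> g ` {1..k} \<union> h ` {1..k})"
    using card_seteq[OF fN NlN] unfolding Nl_def T1_def by simp
  define T where "T = {x, y} \<union> g ` {1..k} \<union> h ` {1..k}
                      \<union> (\<lambda>i. conjg G (g i) \<sigma>) ` {1..k} \<union> (\<lambda>i. conjg G (h i) \<sigma>) ` {1..k}"
  define H where "H = generate G T"
  have TP: "T \<subseteq> P" unfolding T_def using T0M MP MsP inMs g_in gC h_in hC M_def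
    unfolding T0_def by auto
  have HP: "H \<subseteq> P" unfolding H_def using generate_subgroup_incl[OF TP PS] .
  have HS: "subgroup H G" unfolding H_def using generate_is_subgroup TP Pc by blast
  have T0T: "T0 \<subseteq> T" unfolding T0_def T_def by blast
  have MH: "M \<subseteq> H" using M0eq mono_generate[OF T0T] unfolding M0_def H_def by blast
  have X2H: "X2 \<subseteq> H" unfolding X2_def H_def by (rule mono_generate) (auto simp: T_def)
  define Qs where "Qs = {w \<in> carrier G. conjg G w \<sigma> \<in> H}"
  have QsS: "subgroup Qs G" unfolding Qs_def using conj_preimage_subgroup[OF sc HS] .
  have T0Qs: "T0 \<subseteq> Qs"
  proof
    fix w assume w: "w \<in> T0"
    have wc: "w \<in> carrier G" using w T0M Mc by blast
    show "w \<in> Qs"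
    proof (cases "w = x \<or> w = y")
      case True
      then have "conjg G w \<sigma> \<in> X2" using sX2 xX2 by blast
      then show ?thesis using X2H wc unfolding Qs_def by blast
    next
      case False
      then have "conjg G w \<sigma> \<in> T" using w unfolding T0_def T_def by auto
      then have "conjg G w \<sigma> \<in> H" unfolding H_def by (auto intro: generate.incl)
      then show ?thesis using wc unfolding Qs_def by blast
    qed
  qed
  have MQs: "M \<subseteq> Qs" using M0eq generate_subgroup_incl[OF T0Qs QsS] unfolding M0_def by blast
  have MsH: "Ms \<subseteq> H"
  proof
    fix z assume z: "z \<in> Ms"
    then have zc: "z \<in> carrier G" and "conjg G z (inv \<sigma>) \<in> M" unfolding Ms_def by auto
    then have "conjg G (conjg G z (inv \<sigma>)) \<sigma> \<in> H" using MQs unfolding Qs_def by blast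
    then show "z \<in> H" using conjg_conjg_inv2 zc sc by simp
  qed
  have PH: "P \<subseteq> H" unfolding P_def set_mult_def using MH MsH subgroup.m_closed[OF HS] by blast
  have HeqP: "H = P" using HP PH by blast
  have partC: "H \<lhd> (G\<lparr>carrier := centraliser G (generate G {x, y})\<rparr>) \<and> p_group_set p H"
    using PN HeqP fP cP unfolding C_def X2_def p_group_set_def by auto
  show ?thesis using partA partB partC unfolding H_def T_def Let_def by simp
qed

end
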